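(* Let $f(z)=\sum_{n=0}^\infty A_nz^n$, $A_n\in B(\mathcal H)$, be a bounded operator-valued analytic function on the open unit disc $\mathbb D$ such that $A_0=a_0I$ for some $a_0\in\mathbb C$. Then $\sum_{n=0}^\infty\|A_n\|r^n\le\|f\|_\infty$ for every $r\in[0,\frac13]$, and $\frac13$ is the best possible constant. Moreover, the inequality is strict unless $f$ is constant.
   Context: $\|f\|_\infty=\sup_{z\in\mathbb D}\|f(z)\|$; $\mathcal H$ is a separable Hilbert space. *)

theory Defs
  imports "HOL-Analysis.Analysis"
begin

text \<open>A complex Hilbert space is modelled as a real Hilbert space 'h (class real_inner
  + complete_space) together with a complex structure J: a bounded real-linear map with
  J (J x) = -x that preserves the real inner product. Then i acts as J and the complex
  inner product is determined by the real one.\<close>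

definition cplx_structure :: "('h::real_inner \<Rightarrow>\<^sub>L 'h) \<Rightarrow> bool" where
  "cplx_structure J \<longleftrightarrow> (\<forall>x. blinfun_apply J (blinfun_apply J x) = - x) \<and>
     (\<forall>x y. inner (blinfun_apply J x) (blinfun_apply J y) = inner x y)"

text \<open>Multiplication by the complex scalar c, as an operator: c I.\<close>
definition cscal :: "('h::real_normed_vector \<Rightarrow>\<^sub>L 'h) \<Rightarrow> complex \<Rightarrow> ('h \<Rightarrow>\<^sub>L 'h)" where
  "cscal J c = Re c *\<^sub>R id_blinfun + Im c *\<^sub>R J"

text \<open>B(H): bounded complex-linear operators = bounded real-linear operators commuting with J.\<close>
definition is_Bop :: "('h::real_normed_vector \<Rightarrow>\<^sub>L 'h) \<Rightarrow> ('h \<Rightarrow>\<^sub>L 'h) \<Rightarrow> bool" where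
  "is_Bop J A \<longleftrightarrow> A o\<^sub>L J = J o\<^sub>L A"

definition sup_norm :: "(complex \<Rightarrow> 'b::real_normed_vector) \<Rightarrow> real" where
  "sup_norm f = (SUP z\<in>ball 0 1. norm (f z))"

definition admissible ::
  "('h::real_normed_vector \<Rightarrow>\<^sub>L 'h) \<Rightarrow> (nat \<Rightarrow> ('h \<Rightarrow>\<^sub>L 'h)) \<Rightarrow> (complex \<Rightarrow> ('h \<Rightarrow>\<^sub>L 'h)) \<Rightarrow> bool" where
  "admissible J A f \<longleftrightarrow> (\<forall>n. is_Bop J (A n)) \<and>
     (\<forall>z\<in>ball 0 1. (\<lambda>n. cscal J (z ^ n) o\<^sub>L A n) sums f z) \<and>
     bounded (f ` ball 0 1) \<and>
     (\<exists>a0. A 0 = cscal J a0)"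

end

theory Submission
  imports Defs
begin


definition cm :: "('h::real_normed_vector \<Rightarrow>\<^sub>L 'h) \<Rightarrow> complex \<Rightarrow> 'h \<Rightarrow> 'h" where
  "cm J c p = Re c *\<^sub>R p + Im c *\<^sub>R blinfun_apply J p"

definition ip :: "('h::real_inner \<Rightarrow>\<^sub>L 'h) \<Rightarrow> 'h \<Rightarrow> 'h \<Rightarrow> complex" where
  "ip J p q = Complex (inner p q) (inner p (blinfun_apply J q))"

lemma cscal_apply: "blinfun_apply (cscal J c) p = cm J c p"
  by (simp add: cscal_def cm_def plus_blinfun.rep_eq scaleR_blinfun.rep_eq)

lemma cm_add_right: "cm J c (p + q) = cm J c p + cm J c q"
  by (simp add: cm_def blinfun.add_right algebra_simps)

lemma cm_add_left: "cm J (c + d) p = cm J c p + cm J d p"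
  by (simp add: cm_def algebra_simps)

lemma cm_zero_left[simp]: "cm J 0 p = 0" by (simp add: cm_def)
lemma cm_zero_right[simp]: "cm J c 0 = 0" by (simp add: cm_def blinfun.zero_right)
lemma cm_one[simp]: "cm J 1 p = p" by (simp add: cm_def)

lemma cm_of_real: "cm J (of_real r) p = r *\<^sub>R p" by (simp add: cm_def)

lemma Bop_J: "is_Bop J B \<Longrightarrow> blinfun_apply B (blinfun_apply J p) = blinfun_apply J (blinfun_apply B p)"
  unfolding is_Bop_def by (metis blinfun_apply_blinfun_compose)

lemma Bop_cm: assumes "is_Bop J B" shows "blinfun_apply B (cm J c p) = cm J c (blinfun_apply B p)"
  by (simp add: cm_def blinfun.add_right blinfun.scaleR_right Bop_J[OF assms])

context
  fixes J :: "'h::real_inner \<Rightarrow>\<^sub>L 'h"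
  assumes cJ: "cplx_structure J"
begin

lemma JJ: "blinfun_apply J (blinfun_apply J x) = - x"
  using cJ by (simp add: cplx_structure_def)

lemma Jin: "inner (blinfun_apply J x) (blinfun_apply J y) = inner x y"
  using cJ by (simp add: cplx_structure_def)

lemma skew: "inner (blinfun_apply J p) q = - inner p (blinfun_apply J q)"
proof -
  have "inner (blinfun_apply J p) q = inner (blinfun_apply J (blinfun_apply J p)) (blinfun_apply J q)"
    by (simp add: Jin)
  also have "\<dots> = - inner p (blinfun_apply J q)" by (simp add: JJ)
  finally show ?thesis .
qed

lemma Jself: "inner p (blinfun_apply J p) = 0"
  using skew[of p p] by (simp add: inner_commute)

lemma normJ: "norm (blinfun_apply J p) = norm p"
  by (simp add: norm_eq_sqrt_inner Jin)

lemma ip_add_left: "ip J (p + q) r = ip J p r + ip J q r"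
  by (simp add: ip_def complex_eq_iff inner_add_left)

lemma ip_add_right: "ip J p (q + r) = ip J p q + ip J p r"
  by (simp add: ip_def complex_eq_iff inner_add_right blinfun.add_right)

lemma ip_cm_left: "ip J (cm J c p) q = c * ip J p q"
  by (simp add: ip_def cm_def complex_eq_iff inner_add_left skew JJ algebra_simps)

lemma ip_cm_right: "ip J p (cm J c q) = cnj c * ip J p q"
  by (simp add: ip_def cm_def complex_eq_iff inner_add_right blinfun.add_right blinfun.scaleR_right JJ algebra_simps)

lemma inner_ip: "inner p q = Re (ip J p q)"
  by (simp add: ip_def)

lemma inner_cm_left: "inner (cm J c p) q = Re (c * ip J p q)"
  by (simp add: inner_ip ip_cm_left)

lemma inner_cm_right: "inner p (cm J c q) = Re (cnj c * ip J p q)"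
  by (simp add: inner_ip ip_cm_right)

lemma ip_self: "ip J p p = of_real (norm p ^ 2)"
  by (simp add: ip_def complex_eq_iff Jself power2_norm_eq_inner)

lemma norm_cm: "norm (cm J c p) = cmod c * norm p"
proof -
  have "norm (cm J c p) ^ 2 = Re (ip J (cm J c p) (cm J c p))"
    by (simp add: power2_norm_eq_inner inner_ip)
  also have "\<dots> = Re (c * cnj c * ip J p p)" unfolding ip_cm_left ip_cm_right by (simp only: ac_simps)
  also have "c * cnj c = of_real (cmod c ^ 2)" by (simp only: complex_norm_square)
  also have "Re (of_real (cmod c ^ 2) * ip J p p) = (cmod c * norm p) ^ 2"
    by (simp add: ip_self power_mult_distrib)
  finally show ?thesis by (simp add: power2_eq_iff_nonneg)
qed

lemma cm_mult: "cm J c (cm J d p) = cm J (c * d) p"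
  by (simp add: cm_def blinfun.add_right blinfun.scaleR_right JJ algebra_simps)

lemma norm_ip: "cmod (ip J p q) \<le> norm p * norm q"
proof (cases "ip J p q = 0")
  case True then show ?thesis by simp
next
  case False
  define c where "c = cnj (ip J p q) / of_real (cmod (ip J p q))"
  have cc: "cmod c = 1" using False by (simp add: c_def norm_divide)
  have "Re (c * ip J p q) = cmod (ip J p q)"
    using False by (simp add: c_def complex_norm_square[symmetric] power2_eq_square mult.commute)
  then have "cmod (ip J p q) = inner (cm J c p) q" by (simp add: inner_cm_left)
  also have "\<dots> \<le> norm (cm J c p) * norm q" by (rule norm_cauchy_schwarz)
  also have "\<dots> = norm p * norm q" by (simp add: norm_cm cc)
  finally show ?thesis .
qed

lemma norm_cscal:
  assumes "\<exists>x::'h. x \<noteq> 0"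
  shows "norm (cscal J c) = cmod c"
proof (rule antisym)
  show "norm (cscal J c) \<le> cmod c"
    by (rule norm_blinfun_bound) (auto simp: cscal_apply norm_cm)
  from assms obtain x :: 'h where x: "x \<noteq> 0" by blast
  have "cmod c * norm x = norm (blinfun_apply (cscal J c) x)" by (simp add: cscal_apply norm_cm)
  also have "\<dots> \<le> norm (cscal J c) * norm x" by (rule norm_blinfun)
  finally show "cmod c \<le> norm (cscal J c)" using x by simp
qed

lemma norm_cscal_comp:
  assumes "c \<noteq> 0"
  shows "norm B * cmod c \<le> norm (cscal J c o\<^sub>L B)"
proof -
  have "norm B \<le> norm (cscal J c o\<^sub>L B) / cmod c"
  proof (rule norm_blinfun_bound)
    show "0 \<le> norm (cscal J c o\<^sub>L B) / cmod c" by simp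
    fix x
    have "cmod c * norm (blinfun_apply B x) = norm (blinfun_apply (cscal J c o\<^sub>L B) x)"
      by (simp add: cscal_apply norm_cm)
    also have "\<dots> \<le> norm (cscal J c o\<^sub>L B) * norm x" by (rule norm_blinfun)
    finally show "norm (blinfun_apply B x) \<le> norm (cscal J c o\<^sub>L B) / cmod c * norm x"
      using assms by (simp add: field_simps)
  qed
  then show ?thesis using assms by (simp add: field_simps)
qed

end


definition zeta :: "nat \<Rightarrow> nat \<Rightarrow> complex" where
  "zeta N j = cis (2 * pi * real j / real N)"

lemma cmod_zeta[simp]: "cmod (zeta N j) = 1" by (simp add: zeta_def)

lemma root_sum:
  assumes N: "N > 0"
  shows "(\<Sum>j<N. zeta N j ^ k * cnj (zeta N j) ^ m) = (if int N dvd (int k - int m) then of_nat N else 0)"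
proof -
  define q where "q = cis (2 * pi * (real k - real m) / real N)"
  have eq: "zeta N j ^ k * cnj (zeta N j) ^ m = q ^ j" for j
  proof -
    have "zeta N j ^ k * cnj (zeta N j) ^ m
        = cis (real k * (2 * pi * real j / real N)) * cis (real m * (- (2 * pi * real j / real N)))"
      unfolding zeta_def cis_cnj Complex.DeMoivre ..
    also have "\<dots> = cis (real j * (2 * pi * (real k - real m) / real N))"
      by (simp add: cis_mult algebra_simps diff_divide_distrib)
    also have "\<dots> = q ^ j" by (simp add: q_def Complex.DeMoivre)
    finally show ?thesis .
  qed
  show ?thesis
  proof (cases "int N dvd (int k - int m)")
    case True
    then obtain e where e: "int k - int m = int N * e" by (auto elim: dvdE)
    have "real k - real m = real N * of_int e"
      using arg_cong[OF e, of real_of_int] by simp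
    then have "2 * pi * (real k - real m) / real N = 2 * pi * of_int e" using N by simp
    then have "q = cis (2 * pi * of_int e)" unfolding q_def by simp
    also have "\<dots> = 1" by (rule cis_multiple_2pi) simp
    finally have "q = 1" .
    then show ?thesis using True by (simp add: eq)
  next
    case False
    have q1: "q \<noteq> 1"
    proof
      assume "q = 1"
      then have "cos (2 * pi * (real k - real m) / real N) = 1"
        by (metis Re_complex_of_real cis.sel(1) complex_of_real_def q_def one_complex.sel(1))
      then obtain n :: int where n: "2 * pi * (real k - real m) / real N = of_int n * 2 * pi"
        by (auto simp: cos_one_2pi_int)
      then have h: "(real k - real m) * (2*pi) = (of_int n * real N) * (2*pi)" using N by (simp add: field_simps)
      have "real k - real m = of_int n * real N"
        using h pi_gt_zero by (simp only: mult_cancel_right) simp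
      then have "int k - int m = n * int N"
        by (metis of_int_eq_iff of_int_mult of_int_of_nat_eq of_int_diff)
      then show False using False by simp
    qed
    have "q ^ N = cis (2 * pi * (real k - real m))"
      using N by (simp add: q_def Complex.DeMoivre)
    also have "\<dots> = 1"
      by (rule cis_multiple_2pi) (metis Ints_diff Ints_of_nat)
    finally have qN: "q ^ N = 1" .
    have "(\<Sum>j<N. q ^ j) = 0" using geometric_sum[OF q1, of N] qN by simp
    then show ?thesis using False by (simp add: eq)
  qed
qed

lemma adm_apply:
  assumes "admissible J A f" "z \<in> ball 0 1"
  shows "(\<lambda>k. cm J (z ^ k) (blinfun_apply (A k) v)) sums (blinfun_apply (f z) v)"
proof -
  have "(\<lambda>k. cscal J (z ^ k) o\<^sub>L A k) sums f z" using assms by (simp add: admissible_def)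
  from bounded_linear.sums[OF blinfun.bounded_linear_left this, of v]
  show ?thesis by (simp add: cscal_apply)
qed

lemma adm_summable:
  fixes J :: "'h::real_inner \<Rightarrow>\<^sub>L 'h"
  assumes cJ: "cplx_structure J" and adm: "admissible J A f" and r: "0 \<le> \<rho>" "\<rho> < 1"
  shows "summable (\<lambda>k. norm (A k) * \<rho> ^ k)"
proof -
  define \<rho>0 where "\<rho>0 = (1 + \<rho>) / 2"
  have r0: "\<rho> < \<rho>0" "\<rho>0 < 1" "0 < \<rho>0" using r by (auto simp: \<rho>0_def)
  have "complex_of_real \<rho>0 \<in> ball 0 1" using r0 by simp
  then have "(\<lambda>k. cscal J (complex_of_real \<rho>0 ^ k) o\<^sub>L A k) sums f (complex_of_real \<rho>0)"
    using adm by (simp add: admissible_def)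
  then have "(\<lambda>k. cscal J (complex_of_real \<rho>0 ^ k) o\<^sub>L A k) \<longlonglongrightarrow> 0"
    by (intro summable_LIMSEQ_zero sums_summable) 
  then have "Bseq (\<lambda>k. cscal J (complex_of_real \<rho>0 ^ k) o\<^sub>L A k)"
    by (intro convergent_imp_Bseq convergentI)
  then obtain K where K: "\<And>k. norm (cscal J (complex_of_real \<rho>0 ^ k) o\<^sub>L A k) \<le> K"
    by (auto simp: Bseq_def)
  have "norm (A k) * \<rho>0 ^ k \<le> K" for k
  proof -
    have "norm (A k) * cmod (complex_of_real \<rho>0 ^ k) \<le> norm (cscal J (complex_of_real \<rho>0 ^ k) o\<^sub>L A k)"
      using r0 by (intro norm_cscal_comp[OF cJ]) simp
    then show ?thesis using K[of k] r0 by (simp add: norm_power)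
  qed
  then show ?thesis by (intro Abel_lemma[OF r(1) r0(1)])
qed

lemma sup_bound:
  assumes "admissible J A f" "z \<in> ball 0 1"
  shows "norm (f z) \<le> sup_norm f"
proof -
  have "bounded (f ` ball 0 1)" using assms by (simp add: admissible_def)
  then obtain B where "\<forall>x\<in>f ` ball 0 1. norm x \<le> B" by (auto simp: bounded_iff)
  then have "bdd_above ((\<lambda>z. norm (f z)) ` ball 0 1)" by (auto intro!: bdd_aboveI2)
  then show ?thesis unfolding sup_norm_def using assms(2) by (rule cSUP_upper2) simp
qed

lemma sup_nonneg: "admissible J A f \<Longrightarrow> 0 \<le> sup_norm f"
  using sup_bound[of J A f 0] by (meson centre_in_ball norm_ge_zero order_trans zero_less_one)



lemma term_bound:
  fixes z1 z2 z3 z4 d1 d2 d3 d4 :: complex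
  assumes "cmod d1 \<le> 1" "cmod d2 \<le> 1" "cmod d3 \<le> 1" "cmod d4 \<le> 1"
    "0 \<le> p1" "p1 \<le> P" "0 \<le> p2" "p2 \<le> P" "0 \<le> p3" "p3 \<le> P" "0 \<le> p4" "p4 \<le> P"
  shows "\<bar>Re (of_real p1 * z1 * d1 + of_real p2 * z2 * d2 + of_real p3 * z3 * d3 + of_real p4 * z4 * d4)\<bar>
     \<le> P * (cmod z1 + cmod z2 + cmod z3 + cmod z4)"
proof -
  have e: "cmod (of_real p * z * d) \<le> P * cmod z" if "cmod d \<le> 1" "0 \<le> p" "p \<le> P" for p z d
  proof -
    have "cmod (of_real p * z * d) = p * cmod z * cmod d" by (simp add: norm_mult abs_of_nonneg that)
    also have "\<dots> \<le> P * cmod z * 1" using that by (intro mult_mono) auto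
    finally show ?thesis by simp
  qed
  have "\<bar>Re (of_real p1 * z1 * d1 + of_real p2 * z2 * d2 + of_real p3 * z3 * d3 + of_real p4 * z4 * d4)\<bar>
      \<le> cmod (of_real p1 * z1 * d1 + of_real p2 * z2 * d2 + of_real p3 * z3 * d3 + of_real p4 * z4 * d4)"
    by (rule abs_Re_le_cmod)
  also have "\<dots> \<le> cmod (of_real p1 * z1 * d1) + cmod (of_real p2 * z2 * d2) + cmod (of_real p3 * z3 * d3) + cmod (of_real p4 * z4 * d4)"
    by (meson add_mono norm_triangle_ineq order_trans order_refl)
  also have "\<dots> \<le> P * cmod z1 + P * cmod z2 + P * cmod z3 + P * cmod z4"
    using assms by (intro add_mono e) auto
  finally show ?thesis by (simp add: algebra_simps)
qed

lemma int_dvd_small: "int N dvd d \<Longrightarrow> \<bar>d\<bar> < int N \<Longrightarrow> d = 0"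
  by (metis abs_of_nat dvd_imp_le_int not_le)

definition dl :: "nat \<Rightarrow> nat \<Rightarrow> nat \<Rightarrow> complex" where
  "dl N p q = (if int N dvd (int p - int q) then 1 else 0)"

lemma cmod_dl: "cmod (dl N p q) \<le> 1" by (simp add: dl_def)

lemma norm_add_sq: "norm (p + q) ^ 2 = norm p ^ 2 + 2 * inner p q + norm (q::'a::real_inner) ^ 2"
  by (simp add: power2_norm_eq_inner inner_add_left inner_add_right inner_commute)



lemma cx: fixes \<rho> :: real and z \<alpha>1 \<alpha>2 \<alpha>3 \<alpha>4 :: complex
  shows "(of_real \<rho> * z)^k * (\<alpha>1 + cnj ((of_real \<rho> * z)^n) * \<alpha>2 + (of_real \<rho> * z)^n * \<alpha>3
     + (of_real \<rho> * z)^n * (cnj ((of_real \<rho>*z)^n) * \<alpha>4))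
   = of_real(\<rho>^k) * \<alpha>1 * (z^k * cnj z^0) + of_real (\<rho>^(k+n)) * \<alpha>2 * (z^k * cnj z ^n)
     + of_real (\<rho>^(k+n)) * \<alpha>3 * (z^(k+n) * cnj z^0) + of_real(\<rho>^(k+2*n)) * \<alpha>4 * (z^(k+n) * cnj z^n)"
  by (simp add: power_mult_distrib power_add algebra_simps mult_2 power2_eq_square[symmetric] power_mult[symmetric])

lemma two_inner_le: "2 * inner p q \<le> norm p ^ 2 + norm (q::'a::real_inner) ^ 2"
proof -
  have "0 \<le> inner (p - q) (p - q)" by simp
  then show ?thesis by (simp add: inner_diff_left inner_diff_right power2_norm_eq_inner inner_commute)
qed

lemma sum_cnj_zeta: "N > n \<Longrightarrow> n \<ge> 1 \<Longrightarrow> (\<Sum>j<N. cnj (zeta N j) ^ n) = 0"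
  using root_sum[of N 0 n] int_dvd_small[of N "- int n"] by auto



lemma core_rho:
  fixes J :: "'h::real_inner \<Rightarrow>\<^sub>L 'h"
  assumes cJ: "cplx_structure J" and adm: "admissible J A f" and A0: "A 0 = cscal J a"
    and n: "n \<ge> 1" and r: "0 < \<rho>" "\<rho> < 1" and nx: "norm x = 1"
  shows "cmod a ^ 2 + \<rho> ^ (2*n) * norm (blinfun_apply (A n) x + cm J a u) ^ 2
           \<le> sup_norm f ^ 2 * (1 + \<rho> ^ (2*n) * norm u ^ 2)"
proof -
  define M where "M = sup_norm f"
  define c where "c = blinfun_apply (A n) x + cm J a u"
  define ax where "ax = cm J a x"
  define L where "L = cmod a ^ 2 + \<rho> ^ (2*n) * norm c ^ 2"
  define W where "W = 1 + \<rho> ^ (2*n) * norm u ^ 2"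
  have Bop: "\<And>k. is_Bop J (A k)" using adm by (simp add: admissible_def)
  have A0a: "\<And>p. blinfun_apply (A 0) p = cm J a p" by (simp add: A0 cscal_apply)
  define \<alpha>1 where "\<alpha>1 k = ip J (blinfun_apply (A k) x) ax" for k
  define \<alpha>2 where "\<alpha>2 k = ip J (blinfun_apply (A k) x) c" for k
  define \<alpha>3 where "\<alpha>3 k = ip J (blinfun_apply (A k) u) ax" for k
  define \<alpha>4 where "\<alpha>4 k = ip J (blinfun_apply (A k) u) c" for k
  define Bd where "Bd = norm x * norm ax + norm x * norm c + norm u * norm ax + norm u * norm c"
  define D where "D k = 2 * Bd * (norm (A k) * \<rho> ^ k)" for k
  have sumD: "summable D"
    unfolding D_def using adm_summable[OF cJ adm, of \<rho>] r by (intro summable_mult) auto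
  define R where "R N k = Re (of_real (\<rho>^k) * \<alpha>1 k * dl N k 0 + of_real (\<rho>^(k+n)) * \<alpha>2 k * dl N k n
      + of_real (\<rho>^(k+n)) * \<alpha>3 k * dl N (k+n) 0 + of_real (\<rho>^(k+2*n)) * \<alpha>4 k * dl N (k+n) n)" for N k
  define Ri where "Ri k = Re (of_real (\<rho>^k) * \<alpha>1 k * (if k = 0 then 1 else 0) + of_real (\<rho>^(k+n)) * \<alpha>2 k * (if k = n then 1 else 0)
      + of_real (\<rho>^(k+n)) * \<alpha>3 k * 0 + of_real (\<rho>^(k+2*n)) * \<alpha>4 k * (if k = 0 then 1 else 0))" for k
  have cmod_\<alpha>: "cmod (\<alpha>1 k) + cmod (\<alpha>2 k) + cmod (\<alpha>3 k) + cmod (\<alpha>4 k) \<le> norm (A k) * Bd" for k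
  proof -
    have b: "cmod (ip J (blinfun_apply (A k) p) q) \<le> norm (A k) * (norm p * norm q)" for p q
      by (rule order_trans[OF norm_ip[OF cJ]])
         (metis mult.assoc mult_right_mono norm_blinfun norm_ge_zero)
    show ?thesis unfolding \<alpha>1_def \<alpha>2_def \<alpha>3_def \<alpha>4_def Bd_def
      using b[of x ax] b[of x c] b[of u ax] b[of u c] by (simp add: algebra_simps)
  qed
  have rpow: "0 \<le> \<rho> ^ (k + m)" "\<rho> ^ (k + m) \<le> \<rho> ^ k" for k m
    using r by (auto intro: power_decreasing)
  have boundR: "\<bar>R N k\<bar> \<le> D k / 2" for N k
  proof -
    have "\<bar>R N k\<bar> \<le> \<rho>^k * (cmod (\<alpha>1 k) + cmod (\<alpha>2 k) + cmod (\<alpha>3 k) + cmod (\<alpha>4 k))"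
      unfolding R_def using r rpow[of k n] rpow[of k "2*n"]
      by (intro term_bound cmod_dl) auto
    also have "\<dots> \<le> \<rho>^k * (norm (A k) * Bd)" using r by (intro mult_left_mono cmod_\<alpha>) auto
    finally show ?thesis by (simp add: D_def algebra_simps)
  qed
  have boundRi: "\<bar>Ri k\<bar> \<le> D k / 2" for k
  proof -
    have "\<bar>Ri k\<bar> \<le> \<rho>^k * (cmod (\<alpha>1 k) + cmod (\<alpha>2 k) + cmod (\<alpha>3 k) + cmod (\<alpha>4 k))"
      unfolding Ri_def using r rpow[of k n] rpow[of k "2*n"]
      by (intro term_bound) auto
    also have "\<dots> \<le> \<rho>^k * (norm (A k) * Bd)" using r by (intro mult_left_mono cmod_\<alpha>) auto
    finally show ?thesis by (simp add: D_def algebra_simps)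
  qed
  have sumR: "summable (R N)" for N
    by (rule summable_comparison_test'[OF summable_divide[OF sumD, of 2]]) (use boundR in auto)
  have sumRi: "summable Ri"
    by (rule summable_comparison_test'[OF summable_divide[OF sumD, of 2]]) (use boundRi in auto)
  have RRi: "R N k = Ri k" if "k + n < N" for N k
  proof -
    have d1: "dl N k 0 = (if k = 0 then 1 else 0)"
      using that int_dvd_small[of N "int k"] by (auto simp: dl_def)
    have d2: "dl N k n = (if k = n then 1 else 0)"
      using that int_dvd_small[of N "int k - int n"] by (auto simp: dl_def)
    have d3: "dl N (k+n) 0 = 0"
      using that n int_dvd_small[of N "int (k+n)"] by (auto simp: dl_def)
    have d4: "dl N (k+n) n = dl N k 0" by (simp add: dl_def)
    show ?thesis by (simp add: R_def Ri_def d1 d2 d3 d4)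
  qed
  have e1: "Re (\<alpha>1 0) = cmod a ^ 2"
    by (simp add: \<alpha>1_def A0a ax_def ip_self[OF cJ] norm_cm[OF cJ] nx)
  have e2: "Re (\<alpha>2 n) + Re (\<alpha>4 0) = norm c ^ 2"
  proof -
    have "\<alpha>2 n + \<alpha>4 0 = ip J (blinfun_apply (A n) x + cm J a u) c"
      by (simp add: \<alpha>2_def \<alpha>4_def A0a ip_add_left[OF cJ])
    also have "\<dots> = ip J c c" by (simp add: c_def)
    finally show ?thesis by (simp add: ip_self[OF cJ] flip: plus_complex.sel(1))
  qed
  have Li: "suminf Ri = L"
  proof -
    have "suminf Ri = sum Ri {0,n}" by (rule suminf_finite) (auto simp: Ri_def)
    also have "\<dots> = Ri 0 + Ri n" using n by simp
    also have "\<dots> = Re (\<alpha>1 0) + \<rho>^(2*n) * (Re (\<alpha>2 n) + Re (\<alpha>4 0))"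
      using n by (simp add: Ri_def algebra_simps mult_2 mult_2_right)
    also have "\<dots> = L" using e1 e2 by (simp add: L_def)
    finally show ?thesis .
  qed
  define T where "T m = (\<Sum>i. D (i + m))" for m
  have T0: "T \<longlonglongrightarrow> 0" unfolding T_def by (rule suminf_exist_split2[OF sumD])
  have close: "L - T (N - n) \<le> suminf (R N)" if "N > n" for N
  proof -
    define m where "m = N - n"
    define g where "g k = R N k - Ri k" for k
    have sg: "summable g" unfolding g_def by (intro summable_diff sumR sumRi)
    have "suminf g = suminf (R N) - L" unfolding g_def using suminf_diff[OF sumR sumRi] Li by simp
    moreover have "suminf g = (\<Sum>i. g (i + m)) + sum g {..<m}"
      by (rule suminf_split_initial_segment[OF sg])
    moreover have "sum g {..<m} = 0"
      using that by (intro sum.neutral) (auto simp: g_def m_def RRi)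
    moreover have "- T m \<le> (\<Sum>i. g (i + m))"
    proof -
      have "(\<Sum>i. - D (i + m)) \<le> (\<Sum>i. g (i + m))"
      proof (rule suminf_le)
        show "- D (i + m) \<le> g (i + m)" for i
          using boundR[of N "i+m"] boundRi[of "i+m"] by (auto simp: g_def)
        show "summable (\<lambda>i. - D (i + m))"
          by (intro summable_minus summable_ignore_initial_segment sumD)
        show "summable (\<lambda>i. g (i + m))"
          by (intro summable_ignore_initial_segment sg)
      qed
      moreover have "(\<Sum>i. - D (i + m)) = - T m"
        unfolding T_def by (intro suminf_minus summable_ignore_initial_segment sumD)
      ultimately show ?thesis by simp
    qed
    ultimately show ?thesis by (simp add: m_def)
  qed
  have main: "2 * suminf (R N) - L \<le> M ^ 2 * W" if Nn: "N > n" for N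
  proof -
    have N0: "N > 0" using Nn by simp
    define w where "w j = complex_of_real \<rho> * zeta N j" for j
    have cw: "cmod (w j) = \<rho>" for j using r by (simp add: w_def norm_mult)
    have wball: "w j \<in> ball 0 1" for j using cw r by simp
    define V where "V j = x + cm J (w j ^ n) u" for j
    define Q where "Q j = ax + cm J (w j ^ n) c" for j
    define P where "P j = blinfun_apply (f (w j)) (V j)" for j
    have pt: "2 * inner (P j) (Q j) - norm (Q j) ^ 2 \<le> M ^ 2 * norm (V j) ^ 2" for j
    proof -
      have "norm (P j) \<le> norm (f (w j)) * norm (V j)" unfolding P_def by (rule norm_blinfun)
      also have "\<dots> \<le> M * norm (V j)"
        unfolding M_def by (intro mult_right_mono sup_bound[OF adm wball]) auto
      finally have "norm (P j) ^ 2 \<le> (M * norm (V j)) ^ 2" by (intro power_mono) auto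
      then show ?thesis using two_inner_le[of "P j" "Q j"] by (simp add: power_mult_distrib)
    qed
    have sq: "(\<Sum>j<N. norm (y + cm J (w j ^ n) z) ^ 2) = of_nat N * (norm y ^ 2 + \<rho> ^ (2*n) * norm z ^ 2)" for y z
    proof -
      have eq: "norm (y + cm J (w j ^ n) z) ^ 2 = (norm y ^ 2 + \<rho> ^ (2*n) * norm z ^ 2) + 2 * Re (cnj (w j ^ n) * ip J y z)" for j
        by (simp add: norm_add_sq inner_cm_right[OF cJ] norm_cm[OF cJ] norm_power cw power_mult_distrib power_mult[symmetric] mult.commute)
      have "(\<Sum>j<N. norm (y + cm J (w j ^ n) z) ^ 2) = (\<Sum>j<N. (norm y ^ 2 + \<rho> ^ (2*n) * norm z ^ 2) + 2 * Re (cnj (w j ^ n) * ip J y z))"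
        by (simp only: eq)
      also have "\<dots> = of_nat N * (norm y ^ 2 + \<rho> ^ (2*n) * norm z ^ 2) + 2 * (\<Sum>j<N. Re (cnj (w j ^ n) * ip J y z))"
        by (simp add: sum.distrib sum_distrib_left)
      also have "(\<Sum>j<N. Re (cnj (w j ^ n) * ip J y z)) = Re ((\<Sum>j<N. cnj (w j ^ n)) * ip J y z)"
        by (simp add: Re_sum sum_distrib_right)
      also have "(\<Sum>j<N. cnj (w j ^ n)) = 0"
        using sum_cnj_zeta[OF Nn n] by (simp add: w_def power_mult_distrib flip: sum_distrib_left)
      finally show ?thesis by simp
    qed
    have sV: "(\<Sum>j<N. norm (V j) ^ 2) = of_nat N * W"
      unfolding V_def W_def sq using nx by simp
    have sQ: "(\<Sum>j<N. norm (Q j) ^ 2) = of_nat N * L"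
      unfolding Q_def L_def sq using nx by (simp add: ax_def norm_cm[OF cJ])
    define E where "E j k = of_real(\<rho>^k) * \<alpha>1 k * (zeta N j^k * cnj (zeta N j)^0)
       + of_real (\<rho>^(k+n)) * \<alpha>2 k * (zeta N j^k * cnj (zeta N j)^n)
       + of_real (\<rho>^(k+n)) * \<alpha>3 k * (zeta N j^(k+n) * cnj (zeta N j)^0)
       + of_real(\<rho>^(k+2*n)) * \<alpha>4 k * (zeta N j^(k+n) * cnj (zeta N j)^n)" for j k
    have sj: "(\<lambda>k. inner (cm J (w j ^ k) (blinfun_apply (A k) (V j))) (Q j)) sums inner (P j) (Q j)" for j
      unfolding P_def by (rule bounded_linear.sums[OF bounded_linear_inner_left adm_apply[OF adm wball]])
    have tm: "inner (cm J (w j ^ k) (blinfun_apply (A k) (V j))) (Q j) = Re (E j k)" for j k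
    proof -
      have Y: "blinfun_apply (A k) (V j) = blinfun_apply (A k) x + cm J (w j^n) (blinfun_apply (A k) u)"
        by (simp add: V_def blinfun.add_right Bop_cm[OF Bop])
      have "ip J (blinfun_apply (A k) (V j)) (Q j) = \<alpha>1 k + cnj (w j^n) * \<alpha>2 k + w j^n * \<alpha>3 k + w j^n * (cnj (w j^n) * \<alpha>4 k)"
        by (simp add: Y Q_def ip_add_left[OF cJ] ip_add_right[OF cJ] ip_cm_left[OF cJ] ip_cm_right[OF cJ]
            \<alpha>1_def \<alpha>2_def \<alpha>3_def \<alpha>4_def algebra_simps)
      then show ?thesis
        by (simp only: inner_cm_left[OF cJ] E_def w_def cx)
    qed
    have rs: "(\<Sum>j<N. zeta N j ^ p * cnj (zeta N j) ^ q) = of_nat N * dl N p q" for p q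
      using root_sum[OF N0] by (simp add: dl_def)
    have sE: "(\<Sum>j<N. Re (E j k)) = of_nat N * R N k" for k
    proof -
      have "(\<Sum>j<N. E j k) = of_real(\<rho>^k) * \<alpha>1 k * (\<Sum>j<N. zeta N j^k * cnj (zeta N j)^0)
       + of_real (\<rho>^(k+n)) * \<alpha>2 k * (\<Sum>j<N. zeta N j^k * cnj (zeta N j)^n)
       + of_real (\<rho>^(k+n)) * \<alpha>3 k * (\<Sum>j<N. zeta N j^(k+n) * cnj (zeta N j)^0)
       + of_real(\<rho>^(k+2*n)) * \<alpha>4 k * (\<Sum>j<N. zeta N j^(k+n) * cnj (zeta N j)^n)"
        by (simp only: E_def sum.distrib sum_distrib_left)
      also have "\<dots> = of_real (real N) * (of_real(\<rho>^k) * \<alpha>1 k * dl N k 0 + of_real (\<rho>^(k+n)) * \<alpha>2 k * dl N k n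
      + of_real (\<rho>^(k+n)) * \<alpha>3 k * dl N (k+n) 0 + of_real (\<rho>^(k+2*n)) * \<alpha>4 k * dl N (k+n) n)"
        by (simp only: rs) (simp add: algebra_simps)
      finally show ?thesis by (simp add: Re_sum[symmetric] R_def del: of_real_of_nat_eq)
    qed
    have "(\<lambda>k. \<Sum>j<N. inner (cm J (w j ^ k) (blinfun_apply (A k) (V j))) (Q j)) sums (\<Sum>j<N. inner (P j) (Q j))"
      by (rule sums_sum[OF sj])
    then have sPQ: "(\<lambda>k. of_nat N * R N k) sums (\<Sum>j<N. inner (P j) (Q j))"
      by (simp add: tm sE)
    then have "(\<Sum>j<N. inner (P j) (Q j)) = of_nat N * suminf (R N)"
      using sums_unique suminf_mult[OF sumR] by metis
    moreover have "(\<Sum>j<N. 2 * inner (P j) (Q j) - norm (Q j) ^ 2) \<le> (\<Sum>j<N. M ^ 2 * norm (V j) ^ 2)"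
      by (intro sum_mono pt)
    ultimately have "of_nat N * (2 * suminf (R N) - L) \<le> of_nat N * (M ^ 2 * W)"
      by (simp add: sum_subtractf sum_distrib_left[symmetric] sV sQ algebra_simps)
    then show ?thesis using N0 by simp
  qed
  have ineq: "L - 2 * T m \<le> M ^ 2 * W" if "m \<ge> 1" for m
    using close[of "m + n"] main[of "m + n"] that by simp
  have "(\<lambda>m. L - 2 * T m) \<longlonglongrightarrow> L - 2 * 0"
    by (intro tendsto_intros T0)
  then have "(\<lambda>m. L - 2 * T m) \<longlonglongrightarrow> L" by simp
  moreover have "\<exists>N. \<forall>m\<ge>N. L - 2 * T m \<le> M^2 * W" using ineq by blast
  ultimately have "L \<le> M ^ 2 * W" by (rule LIMSEQ_le_const2)
  then show ?thesis by (simp add: L_def W_def M_def c_def)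
qed



lemma core1:
  fixes J :: "'h::real_inner \<Rightarrow>\<^sub>L 'h"
  assumes cJ: "cplx_structure J" and adm: "admissible J A f" and A0: "A 0 = cscal J a"
    and n: "n \<ge> 1" and nx: "norm x = 1"
  shows "cmod a ^ 2 + norm (blinfun_apply (A n) x + cm J a u) ^ 2
           \<le> sup_norm f ^ 2 * (1 + norm u ^ 2)"
proof -
  define \<rho> where "\<rho> j = 1 - inverse (real (Suc j)) / 2" for j
  have r: "0 < \<rho> j" "\<rho> j < 1" for j
  proof -
    have "inverse (real (Suc j)) \<le> 1" "0 < inverse (real (Suc j))" by (auto simp: inverse_le_1_iff)
    then show "0 < \<rho> j" "\<rho> j < 1" by (auto simp: \<rho>_def)
  qed
  have "\<rho> \<longlonglongrightarrow> 1 - 0 / 2" unfolding \<rho>_def by (intro tendsto_intros LIMSEQ_inverse_real_of_nat) simp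
  then have r1: "\<rho> \<longlonglongrightarrow> 1" by simp
  let ?K = "norm (blinfun_apply (A n) x + cm J a u) ^ 2"
  have "(\<lambda>j. cmod a ^ 2 + \<rho> j ^ (2*n) * ?K) \<longlonglongrightarrow> cmod a ^ 2 + 1 ^ (2*n) * ?K"
    by (intro tendsto_intros r1)
  moreover have "(\<lambda>j. sup_norm f ^ 2 * (1 + \<rho> j ^ (2*n) * norm u ^ 2)) \<longlonglongrightarrow> sup_norm f ^ 2 * (1 + 1 ^ (2*n) * norm u ^ 2)"
    by (intro tendsto_intros r1)
  moreover have "\<exists>N. \<forall>j\<ge>N. cmod a ^ 2 + \<rho> j ^ (2*n) * ?K \<le> sup_norm f ^ 2 * (1 + \<rho> j ^ (2*n) * norm u ^ 2)"
    using core_rho[OF cJ adm A0 n r nx] by blast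
  ultimately show ?thesis by (simp add: LIMSEQ_le)
qed

lemma alg_key:
  fixes \<alpha> \<beta> M s :: real
  assumes "0 < \<alpha>" "\<alpha> < M" "0 < \<beta>"
    and K: "\<alpha>^2 + ((1 + s) * \<beta>)^2 \<le> M^2 * (1 + (s * \<beta> / \<alpha>)^2)"
    and s: "s = \<alpha>^2 / (M^2 - \<alpha>^2)"
  shows "M * \<beta> \<le> M^2 - \<alpha>^2"
proof -
  define D where "D = M^2 - \<alpha>^2"
  have D: "D > 0" using assms by (simp add: D_def power_strict_mono)
  have s': "s = \<alpha>^2 / D" "1 + s = M^2 / D" using s D by (auto simp: D_def field_simps)
  have K1: "\<alpha>^2 + (M^2 / D * \<beta>)^2 \<le> M^2 * (1 + (\<alpha>^2 / D * \<beta> / \<alpha>)^2)"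
    using K unfolding s'(2) unfolding s'(1) .
  have "\<alpha>^2 / D * \<beta> / \<alpha> = \<alpha> * \<beta> / D" using assms(1) by (simp add: power2_eq_square)
  then have K2: "\<alpha>^2 + (M^2 / D * \<beta>)^2 \<le> M^2 * (1 + (\<alpha> * \<beta> / D)^2)" using K1 by simp
  then have "D^2 * (\<alpha>^2 + (M^2 / D * \<beta>)^2) \<le> D^2 * (M^2 * (1 + (\<alpha> * \<beta> / D)^2))"
    by (rule mult_left_mono) simp
  also have "D^2 * (\<alpha>^2 + (M^2 / D * \<beta>)^2) = \<alpha>^2 * D^2 + M^4 * \<beta>^2"
  proof -
    have "(M^2 / D * \<beta>)^2 = M^4 * \<beta>^2 / D^2" by (simp add: power_mult_distrib power_divide flip: power_mult)
    then show ?thesis using D by (simp add: distrib_left)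
  qed
  also have "D^2 * (M^2 * (1 + (\<alpha> * \<beta> / D)^2)) = M^2 * D^2 + M^2 * \<alpha>^2 * \<beta>^2"
  proof -
    have "(\<alpha> * \<beta> / D)^2 = \<alpha>^2 * \<beta>^2 / D^2" by (simp add: power_mult_distrib power_divide)
    then show ?thesis using D by (simp add: distrib_left algebra_simps)
  qed
  finally have h: "\<alpha>^2 * D^2 + M^4 * \<beta>^2 \<le> M^2 * D^2 + M^2 * \<alpha>^2 * \<beta>^2" .
  have eq1: "M^4*\<beta>^2 - M^2*\<alpha>^2*\<beta>^2 = M^2*\<beta>^2*D"
    by (simp add: D_def algebra_simps power4_eq_xxxx power2_eq_square)
  have eq2: "M^2*D^2 - \<alpha>^2*D^2 = D*D^2" by (simp add: D_def algebra_simps)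
  have "M^2*\<beta>^2*D \<le> D*D^2" using h eq1 eq2 by linarith
  then have "(M*\<beta>)^2 * D \<le> D^2 * D" by (simp add: power_mult_distrib mult.commute)
  then have "(M*\<beta>)^2 \<le> D^2" using D by simp
  then have "M * \<beta> \<le> D" using D power2_le_imp_le by (metis less_imp_le)
  then show ?thesis by (simp add: D_def)
qed



lemma unit_bound:
  fixes B :: "'a::real_normed_vector \<Rightarrow>\<^sub>L 'b::real_normed_vector"
  assumes "\<And>x. norm x = 1 \<Longrightarrow> norm (blinfun_apply B x) \<le> b" "0 \<le> b"
  shows "norm B \<le> b"
proof (rule norm_blinfun_bound[OF assms(2)])
  fix x :: 'a
  show "norm (blinfun_apply B x) \<le> b * norm x"
  proof (cases "x = 0")
    case True then show ?thesis by (simp add: blinfun.zero_right)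
  next
    case False
    have "blinfun_apply B x = norm x *\<^sub>R blinfun_apply B (x /\<^sub>R norm x)"
      using False by (simp add: blinfun.scaleR_right)
    then have "norm (blinfun_apply B x) = norm x * norm (blinfun_apply B (x /\<^sub>R norm x))" by simp
    also have "\<dots> \<le> norm x * b" using False by (intro mult_left_mono assms(1)) auto
    finally show ?thesis by (simp add: mult.commute)
  qed
qed

lemma coef_unit:
  fixes J :: "'h::real_inner \<Rightarrow>\<^sub>L 'h"
  assumes cJ: "cplx_structure J" and adm: "admissible J A f" and A0: "A 0 = cscal J a"
    and n: "n \<ge> 1" and nx: "norm x = 1"
  shows "norm (blinfun_apply (A n) x) ^ 2 \<le> sup_norm f ^ 2 - cmod a ^ 2"
    and "sup_norm f * norm (blinfun_apply (A n) x) \<le> sup_norm f ^ 2 - cmod a ^ 2"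
proof -
  define M where "M = sup_norm f"
  define y where "y = blinfun_apply (A n) x"
  define \<alpha> where "\<alpha> = cmod a"
  define \<beta> where "\<beta> = norm y"
  have M0: "0 \<le> M" unfolding M_def by (rule sup_nonneg[OF adm])
  have K0: "\<alpha>^2 + \<beta>^2 \<le> M^2"
    using core1[OF cJ adm A0 n nx, of 0] by (simp add: M_def \<alpha>_def \<beta>_def y_def)
  then show "norm (blinfun_apply (A n) x) ^ 2 \<le> sup_norm f ^ 2 - cmod a ^ 2"
    by (simp add: M_def \<alpha>_def \<beta>_def y_def)
  have "M * \<beta> \<le> M^2 - \<alpha>^2"
  proof (cases "\<beta> = 0")
    case True then show ?thesis using K0 by simp
  next
    case False
    then have b0: "\<beta> > 0" by (simp add: \<beta>_def)
    show ?thesis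
    proof (cases "\<alpha> = 0")
      case True
      then have "\<beta>^2 \<le> M^2" using K0 by simp
      then have "\<beta> \<le> M" using M0 power2_le_imp_le by blast
      then show ?thesis using True M0 by (simp add: power2_eq_square mult_left_mono)
    next
      case False
      then have a0: "\<alpha> > 0" "a \<noteq> 0" by (auto simp: \<alpha>_def)
      have "\<alpha>^2 < M^2" proof -
        have "0 < \<beta>^2" using b0 by simp
        then show ?thesis using K0 by linarith
      qed
      then have aM: "\<alpha> < M" using M0 by (meson power_less_imp_less_base)
      define s where "s = \<alpha>^2 / (M^2 - \<alpha>^2)"
      have s0: "s \<ge> 0" using aM a0 \<open>\<alpha>^2 < M^2\<close> by (simp add: s_def)
      define u where "u = cm J (of_real s / a) y"
      have "cm J a u = s *\<^sub>R y" using a0 by (simp add: u_def cm_mult[OF cJ] cm_of_real)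
      then have "y + cm J a u = (1 + s) *\<^sub>R y" by (simp add: algebra_simps)
      then have n1: "norm (y + cm J a u) = (1 + s) * \<beta>" using s0 by (simp add: \<beta>_def)
      have n2: "norm u = s * \<beta> / \<alpha>"
        using s0 by (simp add: u_def norm_cm[OF cJ] norm_divide \<alpha>_def \<beta>_def)
      have "\<alpha>^2 + ((1 + s) * \<beta>)^2 \<le> M^2 * (1 + (s * \<beta> / \<alpha>)^2)"
        using core1[OF cJ adm A0 n nx, of u] n1 n2 by (simp add: M_def \<alpha>_def y_def)
      then show ?thesis using alg_key[OF a0(1) aM b0 _ s_def] by blast
    qed
  qed
  then show "sup_norm f * norm (blinfun_apply (A n) x) \<le> sup_norm f ^ 2 - cmod a ^ 2"
    by (simp add: M_def \<alpha>_def \<beta>_def y_def)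
qed



context
  fixes J :: "'h::real_inner \<Rightarrow>\<^sub>L 'h"
  assumes cJ: "cplx_structure J" and nt: "\<exists>x::'h. x \<noteq> 0"
begin

lemma exists_unit: obtains x :: 'h where "norm x = 1"
proof -
  from nt obtain x :: 'h where "x \<noteq> 0" by blast
  then have "norm (x /\<^sub>R norm x) = 1" by simp
  then show ?thesis using that by blast
qed

lemma a_le_M:
  assumes adm: "admissible J A f" and A0: "A 0 = cscal J a"
  shows "cmod a \<le> sup_norm f"
proof -
  obtain x :: 'h where nx: "norm x = 1" by (rule exists_unit)
  have "norm (blinfun_apply (A 1) x) ^ 2 \<le> sup_norm f ^ 2 - cmod a ^ 2"
    by (rule coef_unit(1)[OF cJ adm A0 _ nx]) simp
  then have "cmod a ^ 2 \<le> sup_norm f ^ 2" by (smt (verit) zero_le_power2)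
  then show ?thesis using sup_nonneg[OF adm] power2_le_imp_le by blast
qed

lemma coef_zero:
  assumes adm: "admissible J A f" and A0: "A 0 = cscal J a" and aM: "cmod a = sup_norm f" and n: "n \<ge> 1"
  shows "A n = 0"
proof -
  have "norm (A n) \<le> 0"
  proof (rule unit_bound)
    fix x :: 'h assume nx: "norm x = 1"
    have "norm (blinfun_apply (A n) x) ^ 2 \<le> 0"
      using coef_unit(1)[OF cJ adm A0 n nx] aM by simp
    then show "norm (blinfun_apply (A n) x) \<le> 0" by simp
  qed simp
  then show ?thesis by simp
qed

lemma coef_le:
  assumes adm: "admissible J A f" and A0: "A 0 = cscal J a" and M: "sup_norm f > 0" and n: "n \<ge> 1"
  shows "norm (A n) \<le> (sup_norm f ^ 2 - cmod a ^ 2) / sup_norm f"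
proof (rule unit_bound)
  fix x :: 'h assume nx: "norm x = 1"
  show "norm (blinfun_apply (A n) x) \<le> (sup_norm f ^ 2 - cmod a ^ 2) / sup_norm f"
    using coef_unit(2)[OF cJ adm A0 n nx] M by (simp add: field_simps)
next
  show "0 \<le> (sup_norm f ^ 2 - cmod a ^ 2) / sup_norm f"
    using a_le_M[OF adm A0] M sup_nonneg[OF adm] by (simp add: power_mono)
qed

lemma bohr_bound:
  assumes adm: "admissible J A f" and A0: "A 0 = cscal J a" and M: "sup_norm f > 0"
    and r: "0 \<le> r" "r \<le> 1/3"
  shows "summable (\<lambda>n. norm (A n) * r ^ n)"
    and "(\<Sum>n. norm (A n) * r ^ n) \<le> cmod a + (sup_norm f ^ 2 - cmod a ^ 2) / (2 * sup_norm f)"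
proof -
  show sm: "summable (\<lambda>n. norm (A n) * r ^ n)"
    using adm_summable[OF cJ adm r(1)] r by simp
  define C where "C = (sup_norm f ^ 2 - cmod a ^ 2) / sup_norm f"
  have C0: "0 \<le> C"
    using a_le_M[OF adm A0] M sup_nonneg[OF adm] by (simp add: C_def power_mono)
  have geo: "(\<lambda>k. C * r * r ^ k) sums (C * r * (1 / (1 - r)))"
    using r by (intro sums_mult geometric_sums) auto
  have "(\<Sum>k. norm (A (Suc k)) * r ^ (Suc k)) \<le> (\<Sum>k. C * r * r ^ k)"
  proof (rule suminf_le)
    show "norm (A (Suc k)) * r ^ Suc k \<le> C * r * r ^ k" for k
    proof -
      have "norm (A (Suc k)) \<le> C" using coef_le[OF adm A0 M, of "Suc k"] by (simp add: C_def)
      then have "norm (A (Suc k)) * r ^ Suc k \<le> C * r ^ Suc k" using r by (intro mult_right_mono) auto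
      then show ?thesis by (simp add: mult.assoc)
    qed
    show "summable (\<lambda>k. norm (A (Suc k)) * r ^ Suc k)" using summable_Suc_iff[where f="\<lambda>n. norm (A n) * r ^ n"] sm by blast
    show "summable (\<lambda>k. C * r * r ^ k)" using geo by (rule sums_summable)
  qed
  also have "\<dots> = C * r * (1 / (1 - r))" using geo by (rule sums_unique[symmetric])
  also have "\<dots> \<le> C * (1/2)"
  proof -
    have "r * (1 / (1 - r)) \<le> 1/2" using r by (simp add: field_simps)
    then have "C * (r * (1 / (1 - r))) \<le> C * (1/2)" using C0 by (rule mult_left_mono)
    then show ?thesis by (simp only: mult.assoc)
  qed
  finally have tail: "(\<Sum>k. norm (A (Suc k)) * r ^ (Suc k)) \<le> C / 2" by simp
  have "(\<Sum>n. norm (A n) * r ^ n) = norm (A 0) + (\<Sum>k. norm (A (Suc k)) * r ^ (Suc k))"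
    using suminf_split_head[OF sm] by simp
  also have "norm (A 0) = cmod a" using A0 norm_cscal[OF cJ nt] by simp
  finally show "(\<Sum>n. norm (A n) * r ^ n) \<le> cmod a + (sup_norm f ^ 2 - cmod a ^ 2) / (2 * sup_norm f)"
    using tail by (simp add: C_def)
qed

end

lemma const_of_zero:
  assumes adm: "admissible J A f" and z: "\<And>n. n \<ge> 1 \<Longrightarrow> A n = 0"
  shows "\<forall>z\<in>ball 0 1. f z = A 0"
proof
  fix z :: complex assume zb: "z \<in> ball 0 1"
  have s: "(\<lambda>k. cscal J (z ^ k) o\<^sub>L A k) sums f z" using adm zb by (simp add: admissible_def)
  have "(\<lambda>k. cscal J (z ^ k) o\<^sub>L A k) = (\<lambda>k. if k = 0 then A 0 else 0)"
  proof
    fix k show "cscal J (z ^ k) o\<^sub>L A k = (if k = 0 then A 0 else 0)"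
    proof (cases "k = 0")
      case True
      have "cscal J 1 = id_blinfun" by (simp add: cscal_def)
      then show ?thesis using True by (simp, intro blinfun_eqI) simp
    next
      case False then show ?thesis using z[of k] by simp
    qed
  qed
  with s have "(\<lambda>k. if k = 0 then A 0 else 0) sums f z" by simp
  moreover have "(\<lambda>k. if k = 0 then A 0 else 0) sums A 0" using sums_single[of 0 "\<lambda>_. A 0"] by simp
  ultimately show "f z = A 0" using sums_unique2 by blast
qed



lemma cscal_comp:
  fixes J :: "'h::real_inner \<Rightarrow>\<^sub>L 'h"
  assumes cJ: "cplx_structure J"
  shows "cscal J c o\<^sub>L cscal J d = cscal J (c * d)"
  by (rule blinfun_eqI) (simp add: cscal_apply cm_mult[OF cJ])

lemma cscal_Bop: "is_Bop J (cscal J c)"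
  unfolding is_Bop_def
  by (rule blinfun_eqI) (simp add: cscal_apply cm_def blinfun.add_right blinfun.scaleR_right)

lemma bounded_linear_cscal: "bounded_linear (cscal J)"
proof -
  have "cscal J = (\<lambda>c. Re c *\<^sub>R id_blinfun + Im c *\<^sub>R J)" by (auto simp: cscal_def)
  moreover have "bounded_linear (\<lambda>c. Re c *\<^sub>R id_blinfun + Im c *\<^sub>R J)"
    by (intro bounded_linear_add bounded_linear_compose[OF bounded_linear_scaleR_left bounded_linear_Re]
        bounded_linear_compose[OF bounded_linear_scaleR_left bounded_linear_Im])
  ultimately show ?thesis by simp
qed

lemma mobius_bound:
  fixes b :: real and z :: complex
  assumes b: "0 < b" "b < 1" and z: "cmod z < 1"
  shows "cmod (of_real b - of_real (1 - b^2) * z / (1 - of_real b * z)) \<le> 1"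
proof -
  have nz: "1 - of_real b * z \<noteq> 0"
  proof
    assume "1 - of_real b * z = 0"
    then have "cmod (of_real b * z) = 1" by (metis eq_iff_diff_eq_0 norm_one)
    moreover have "cmod (of_real b * z) < 1" using b z
      by (simp add: norm_mult) (metis abs_of_pos less_trans mult_strict_mono' mult_1 norm_ge_zero zero_le_one order_less_imp_le)
    ultimately show False by simp
  qed
  have eq: "of_real b - of_real (1 - b^2) * z / (1 - of_real b * z) = (of_real b - z) / (1 - of_real b * z)"
    using nz by (simp add: field_simps power2_eq_square)
  define x where "x = Re z"
  define y where "y = Im z"
  have "cmod z ^ 2 < 1" using z by (simp add: power_less_one_iff)
  then have xy: "x^2 + y^2 < 1" by (simp add: cmod_power2 x_def y_def)
  have "cmod (of_real b - z) ^ 2 = (b - x)^2 + y^2" by (simp add: cmod_power2 x_def y_def)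
  also have "\<dots> \<le> (1 - b*x)^2 + (b*y)^2"
  proof -
    have "0 \<le> (1 - b^2) * (1 - (x^2 + y^2))"
      using b xy by (intro mult_nonneg_nonneg) (auto simp: power_le_one abs_of_pos power2_eq_square mult_le_one)
    moreover have "(1 - b*x)^2 + (b*y)^2 - ((b - x)^2 + y^2) = (1 - b^2) * (1 - (x^2 + y^2))"
      by (simp add: power2_eq_square algebra_simps)
    ultimately show ?thesis by linarith
  qed
  also have "\<dots> = cmod (1 - of_real b * z) ^ 2" by (simp add: cmod_power2 x_def y_def power_mult_distrib)
  finally have "cmod (of_real b - z) \<le> cmod (1 - of_real b * z)"
    using power2_le_imp_le norm_ge_zero by blast
  then show ?thesis unfolding eq using nz by (simp add: norm_divide divide_le_eq_1)
qed

lemma counterexample: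
  fixes J :: "'h::real_inner \<Rightarrow>\<^sub>L 'h"
  assumes cJ: "cplx_structure J" and nt: "\<exists>x::'h. x \<noteq> 0" and r: "r > 1/3"
  shows "\<exists>A f. admissible J A f \<and>
            \<not> (summable (\<lambda>n. norm (A n) * r ^ n) \<and> (\<Sum>n. norm (A n) * r ^ n) \<le> sup_norm f)"
proof -
  define r' where "r' = min r (1/2)"
  have r': "1/3 < r'" "r' \<le> 1/2" "r' \<le> r" using r by (auto simp: r'_def)
  define q where "q = (1 - r') / (2 * r')"
  have q: "q < 1" "0 \<le> q" using r' by (auto simp: q_def field_simps)
  define b where "b = (1 + q) / 2"
  have b: "0 < b" "b < 1" "q < b" using q by (auto simp: b_def)
  have b2: "2 * r' * b > 1 - r'"
  proof -
    have "2 * r' * q = 1 - r'" using r' by (simp add: q_def)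
    moreover have "2 * r' * q < 2 * r' * b" using b r' by (intro mult_strict_left_mono) auto
    ultimately show ?thesis by simp
  qed
  define cf :: "nat \<Rightarrow> complex" where
    "cf k = (if k = 0 then of_real b else - of_real ((1 - b^2) * b^(k-1)))" for k
  define \<phi> where "\<phi> z = of_real b - of_real (1 - b^2) * z / (1 - of_real b * z)" for z :: complex
  define A where "A k = cscal J (cf k)" for k
  define f where "f z = cscal J (\<phi> z)" for z
  have ser: "(\<lambda>k. cf k * z ^ k) sums \<phi> z" if zb: "z \<in> ball 0 1" for z
  proof -
    have "cmod (of_real b * z) < 1" using zb b
      by (simp add: norm_mult) (metis abs_of_pos less_trans mult_strict_mono' mult_1 norm_ge_zero zero_le_one order_less_imp_le)
    then have g: "(\<lambda>k. (of_real b * z) ^ k) sums (1 / (1 - of_real b * z))" by (rule geometric_sums)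
    have nz: "1 - of_real b * z \<noteq> 0" using \<open>cmod (of_real b * z) < 1\<close> by (metis eq_iff_diff_eq_0 norm_one less_irrefl)
    define c where "c = - of_real (1 - b^2) * z"
    have "(\<lambda>k. c * (of_real b * z) ^ k) sums (c * (1 / (1 - of_real b * z)))" by (rule sums_mult[OF g])
    moreover have "(\<lambda>k. cf (Suc k) * z ^ Suc k) = (\<lambda>k. c * (of_real b * z) ^ k)"
      by (auto simp: cf_def c_def power_mult_distrib algebra_simps)
    ultimately have "(\<lambda>k. cf (Suc k) * z ^ Suc k) sums (c * (1 / (1 - of_real b * z)))" by simp
    then have "(\<lambda>k. cf k * z ^ k) sums (c * (1 / (1 - of_real b * z)) + cf 0 * z ^ 0)"
      by (subst (asm) sums_Suc_iff) 
    moreover have "c * (1 / (1 - of_real b * z)) + cf 0 * z ^ 0 = \<phi> z"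
      using nz by (simp add: c_def cf_def \<phi>_def field_simps)
    ultimately show ?thesis by simp
  qed
  have phib: "cmod (\<phi> z) \<le> 1" if "z \<in> ball 0 1" for z
    using mobius_bound[OF b(1,2)] that by (simp add: \<phi>_def)
  have adm: "admissible J A f"
    unfolding admissible_def
  proof (intro conjI ballI allI)
    show "is_Bop J (A n)" for n by (simp add: A_def cscal_Bop)
    show "(\<lambda>n. cscal J (z ^ n) o\<^sub>L A n) sums f z" if "z \<in> ball 0 1" for z
    proof -
      have "(\<lambda>k. cscal J (cf k * z ^ k)) sums cscal J (\<phi> z)"
        by (rule bounded_linear.sums[OF bounded_linear_cscal ser[OF that]])
      then show ?thesis by (simp add: A_def f_def cscal_comp[OF cJ] mult.commute)
    qed
    show "bounded (f ` ball 0 1)"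
      unfolding bounded_iff using phib by (auto simp: f_def norm_cscal[OF cJ nt] intro!: exI[of _ 1])
    show "\<exists>a0. A 0 = cscal J a0" by (auto simp: A_def)
  qed
  have supf: "sup_norm f \<le> 1"
    unfolding sup_norm_def by (rule cSUP_least) (auto simp: f_def norm_cscal[OF cJ nt] phib)
  have nA: "norm (A (Suc k)) = (1 - b^2) * b ^ k" for k
  proof -
    have "0 \<le> 1 - b^2" using b by (simp add: power_le_one)
    moreover have "cmod (cf (Suc k)) = \<bar>(1 - b^2) * b ^ k\<bar>"
      by (simp add: cf_def del: of_real_mult of_real_power of_real_diff)
    ultimately show ?thesis using b by (simp add: A_def norm_cscal[OF cJ nt] abs_mult)
  qed
  have nA0: "norm (A 0) = b" using b by (simp add: A_def norm_cscal[OF cJ nt] cf_def)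
  define S where "S = (1 - b^2) * r' * (1 / (1 - b * r')) + b"
  have "b * r' \<le> 1 * (1/2)" using b r' by (intro mult_mono) auto
  then have br: "0 < 1 - b * r'" by linarith
  have gs: "(\<lambda>k. norm (A k) * r' ^ k) sums S"
  proof -
    have "\<bar>b * r'\<bar> < 1" using b r' br by auto
    then have "(\<lambda>k. (1 - b^2) * r' * (b * r') ^ k) sums ((1 - b^2) * r' * (1 / (1 - b * r')))"
      by (intro sums_mult geometric_sums) simp
    moreover have "(\<lambda>k. norm (A (Suc k)) * r' ^ Suc k) = (\<lambda>k. (1 - b^2) * r' * (b * r') ^ k)"
      by (auto simp: nA power_mult_distrib)
    ultimately have "(\<lambda>k. norm (A (Suc k)) * r' ^ Suc k) sums ((1 - b^2) * r' * (1 / (1 - b * r')))" by simp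
    then show ?thesis unfolding S_def using nA0 by (subst (asm) sums_Suc_iff) simp
  qed
  have S1: "1 < S"
  proof -
    have "(1 - b) * (1 - b * r') < (1 - b^2) * r'"
    proof -
      have "0 < (1 - b) * (r' * (1 + 2 * b) - 1)" using b b2 by (intro mult_pos_pos) (auto simp: algebra_simps)
      moreover have "(1 - b^2) * r' - (1 - b) * (1 - b * r') = (1 - b) * (r' * (1 + 2 * b) - 1)"
        by (simp add: power2_eq_square algebra_simps)
      ultimately show ?thesis by linarith
    qed
    then have "1 - b < (1 - b^2) * r' / (1 - b * r')" using br by (simp add: less_divide_eq)
    then show ?thesis by (simp add: S_def)
  qed
  have "\<not> (summable (\<lambda>n. norm (A n) * r ^ n) \<and> (\<Sum>n. norm (A n) * r ^ n) \<le> sup_norm f)"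
  proof
    assume h: "summable (\<lambda>n. norm (A n) * r ^ n) \<and> (\<Sum>n. norm (A n) * r ^ n) \<le> sup_norm f"
    have "S \<le> (\<Sum>n. norm (A n) * r ^ n)"
    proof -
      have "(\<Sum>n. norm (A n) * r' ^ n) \<le> (\<Sum>n. norm (A n) * r ^ n)"
      proof (rule suminf_le)
        show "norm (A n) * r' ^ n \<le> norm (A n) * r ^ n" for n
          using r' by (intro mult_left_mono power_mono) auto
        show "summable (\<lambda>n. norm (A n) * r' ^ n)" using gs by (rule sums_summable)
        show "summable (\<lambda>n. norm (A n) * r ^ n)" using h by blast
      qed
      then show ?thesis using sums_unique[OF gs] by simp
    qed
    then show False using h supf S1 by linarith
  qed
  then show ?thesis using adm by blast
qed



lemma bohr_alg:
  fixes \<alpha> M :: real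
  assumes "0 < M"
  shows "\<alpha> + (M^2 - \<alpha>^2) / (2 * M) = M - (M - \<alpha>)^2 / (2 * M)"
  using assms by (simp add: field_simps power2_eq_square)

theorem corollary2p11:
  fixes J :: "'h::{real_inner, complete_space} \<Rightarrow>\<^sub>L 'h"
  assumes "cplx_structure J"
    and "\<exists>D::'h set. countable D \<and> closure D = UNIV"
    and "\<exists>x::'h. x \<noteq> 0"
  shows "(\<forall>A f. admissible J A f \<longrightarrow>
            (\<forall>r\<in>{0..1/3::real}. summable (\<lambda>n. norm (A n) * r ^ n) \<and>
                (\<Sum>n. norm (A n) * r ^ n) \<le> sup_norm f))
      \<and> (\<forall>r>1/3::real. \<exists>A f. admissible J A f \<and>
            \<not> (summable (\<lambda>n. norm (A n) * r ^ n) \<and> (\<Sum>n. norm (A n) * r ^ n) \<le> sup_norm f))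
      \<and> (\<forall>A f. admissible J A f \<and> \<not> (\<exists>C. \<forall>z\<in>ball 0 1. f z = C) \<longrightarrow>
            (\<forall>r\<in>{0..1/3::real}. (\<Sum>n. norm (A n) * r ^ n) < sup_norm f))"
proof (intro conjI allI impI ballI)
  note cJ = assms(1) and nt = assms(3)
  show "\<exists>A f. admissible J A f \<and>
            \<not> (summable (\<lambda>n. norm (A n) * r ^ n) \<and> (\<Sum>n. norm (A n) * r ^ n) \<le> sup_norm f)"
    if "r > 1/3" for r
    by (rule counterexample[OF cJ nt that])
next
  fix A f r
  assume adm: "admissible J A f" and r: "r \<in> {0..1/3::real}"
  note cJ = assms(1) and nt = assms(3)
  obtain a where A0: "A 0 = cscal J a" using adm by (auto simp: admissible_def)
  have aM: "cmod a \<le> sup_norm f" by (rule a_le_M[OF cJ nt adm A0])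
  have M0: "0 \<le> sup_norm f" by (rule sup_nonneg[OF adm])
  have "summable (\<lambda>n. norm (A n) * r ^ n) \<and> (\<Sum>n. norm (A n) * r ^ n) \<le> sup_norm f"
  proof (cases "sup_norm f = 0")
    case True
    then have a0: "cmod a = sup_norm f" "a = 0" using aM by auto
    have "A n = 0" for n
    proof (cases "n = 0")
      case True
      then show ?thesis using A0 a0 by (intro blinfun_eqI) (simp add: cscal_apply)
    next
      case False
      then show ?thesis using coef_zero[OF cJ nt adm A0 a0(1)] by simp
    qed
    then show ?thesis using True by simp
  next
    case False
    then have M: "sup_norm f > 0" using M0 by simp
    have "(\<Sum>n. norm (A n) * r ^ n) \<le> sup_norm f - (sup_norm f - cmod a)^2 / (2 * sup_norm f)"
      using bohr_bound(2)[OF cJ nt adm A0 M] r bohr_alg[OF M] by auto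
    also have "\<dots> \<le> sup_norm f" using M by simp
    finally show ?thesis using bohr_bound(1)[OF cJ nt adm A0 M] r by auto
  qed
  then show "summable (\<lambda>n. norm (A n) * r ^ n)" "(\<Sum>n. norm (A n) * r ^ n) \<le> sup_norm f" by auto
next
  fix A f r
  assume h: "admissible J A f \<and> \<not> (\<exists>C. \<forall>z\<in>ball 0 1. f z = C)" and r: "r \<in> {0..1/3::real}"
  note cJ = assms(1) and nt = assms(3)
  have adm: "admissible J A f" using h by blast
  obtain a where A0: "A 0 = cscal J a" using adm by (auto simp: admissible_def)
  have aM: "cmod a \<le> sup_norm f" by (rule a_le_M[OF cJ nt adm A0])
  have aM': "cmod a < sup_norm f"
  proof (rule ccontr)
    assume "\<not> cmod a < sup_norm f"
    then have "cmod a = sup_norm f" using aM by simp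
    then have z: "A n = 0" if "n \<ge> 1" for n using coef_zero[OF cJ nt adm A0 _ that] by blast
    have "\<forall>z\<in>ball 0 1. f z = A 0" by (rule const_of_zero[OF adm z])
    then show False using h by blast
  qed
  have M: "sup_norm f > 0" using aM' norm_ge_zero[of a] by linarith
  have "(\<Sum>n. norm (A n) * r ^ n) \<le> sup_norm f - (sup_norm f - cmod a)^2 / (2 * sup_norm f)"
    using bohr_bound(2)[OF cJ nt adm A0 M] r bohr_alg[OF M] by auto
  also have "\<dots> < sup_norm f" using M aM' by simp
  finally show "(\<Sum>n. norm (A n) * r ^ n) < sup_norm f" .
qed


end
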